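(* Let $(I,\preccurlyeq)$ be a directed set, let $S(\Lambda^{\succcurlyeq})$ be a contravariant direct spectrum over $(I,\preccurlyeq)$ with sets $\lambda_0(i)$, transports $\lambda^{\succcurlyeq}_{ji}$ and Bishop spaces $\mathcal F_i=(\lambda_0(i),F_i)$, let $\mathcal F=(X,F)$ be a Bishop space, and let $S(\Lambda^{\succcurlyeq})\to\mathcal F$ be the direct spectrum over $(I,\preccurlyeq)$ with sets $\mathrm{Mor}(\mathcal F_i,\mathcal F)$, transports $(\lambda^{\succcurlyeq}_{ji})^+:\mathrm{Mor}(\mathcal F_i,\mathcal F)\to\mathrm{Mor}(\mathcal F_j,\mathcal F)$, $\phi\mapsto\phi\circ\lambda^{\succcurlyeq}_{ji}$ (for $i\preccurlyeq j$), and Bishop spaces $\mathcal F_i\to\mathcal F$. Then there is a function $\widehat{\ }:\underset{\to}{\mathrm{Lim}}\,[\mathrm{Mor}(\mathcal F_i,\mathcal F)]\to\mathrm{Mor}(\underset{\leftarrow}{\mathrm{Lim}}\,\mathcal F_i,\mathcal F)$ such that: (i) $\widehat{\ }\in\mathrm{Mor}(\underset{\to}{\mathrm{Lim}}\,(\mathcal F_i\to\mathcal F),(\underset{\leftarrow}{\mathrm{Lim}}\,\mathcal F_i)\to\mathcal F)$; (ii) if for every $j\in I$ and every $y\in\lambda_0(j)$ there is $\Theta_y\in\prod^{\succcurlyeq}_{i\in I}\lambda_0(i)$ with $\Theta_y(j)=y$ in $\lambda_0(j)$, then $\widehat{\ }$ is an embedding.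
   Context: Work in Bishop-style constructive mathematics. Each set has its own equality; functions respect it; an embedding $f$ satisfies $f(x)=f(x')\Rightarrow x=x'$. A directed set: a set with a reflexive transitive relation respecting equality, any two elements having a common upper bound. A direct family over $(I,\preccurlyeq)$: sets $\mu_0(i)$ and functions $\mu^{\preccurlyeq}_{ij}:\mu_0(i)\to\mu_0(j)$ for $i\preccurlyeq j$ with $\mu^{\preccurlyeq}_{ii}=\mathrm{id}$, $\mu^{\preccurlyeq}_{ik}=\mu^{\preccurlyeq}_{jk}\circ\mu^{\preccurlyeq}_{ij}$. A contravariant direct family: sets $\lambda_0(i)$ and functions $\lambda^{\succcurlyeq}_{ji}:\lambda_0(j)\to\lambda_0(i)$ for $i\preccurlyeq j$ with $\lambda^{\succcurlyeq}_{ii}=\mathrm{id}$, $\lambda^{\succcurlyeq}_{ki}=\lambda^{\succcurlyeq}_{ji}\circ\lambda^{\succcurlyeq}_{kj}$. Bishop spaces: a Bishop topology on $X$ is a set $F$ of functions $X\to\mathbb R$ containing constants, closed under addition, composition with functions $\mathbb R\to\mathbb R$ uniformly continuous on every $[-n,n]$, and uniform limits; $\bigvee F_0$ = least Bishop topology containing $F_0$; Bishop morphism $(X,F)\to(Y,G)$: function $h$ with $g\circ h\in F$ for all $g\in G$. Exponential: $\mathcal F\to\mathcal G=(\mathrm{Mor}(\mathcal F,\mathcal G),\bigvee\{\phi_{x,g}\})$, $\phi_{x,g}(h)=g(h(x))$. A (contravariant) direct spectrum: a (contravariant) direct family with Bishop topologies making all transports Bishop morphisms. Direct limit of a direct spectrum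 (sets $\mu_0(i)$, transports $\mu^{\preccurlyeq}_{ij}$, topologies $G_i$): pairs $(i,x)$ with $(i,x)=(j,y)$ iff there is $k\succcurlyeq i,j$ with $\mu^{\preccurlyeq}_{ik}(x)=\mu^{\preccurlyeq}_{jk}(y)$; $\underset{\to}{\mathrm{Lim}}\,\mu_0(i)$ = classes $\mathrm{eql}_0(i,x)$; $\prod^{\succcurlyeq}G_i$ = dependent $\Theta$ with $\Theta_i\in G_i$, $\Theta_i=\Theta_j\circ\mu^{\preccurlyeq}_{ij}$; $\underset{\to}{\mathrm{Lim}}\,\mathcal G_i=(\underset{\to}{\mathrm{Lim}}\,\mu_0(i),\bigvee\{\mathrm{eql}_0f_\Theta\})$ with $\mathrm{eql}_0f_\Theta(\mathrm{eql}_0(i,x))=\Theta_i(x)$. Inverse limit of the contravariant spectrum: $\prod^{\succcurlyeq}\lambda_0(i)$ = dependent $\Phi$ with $\Phi_i\in\lambda_0(i)$, $\Phi_i=\lambda^{\succcurlyeq}_{ji}(\Phi_j)$ for $i\preccurlyeq j$; $\pi_i(\Phi)=\Phi_i$; $\underset{\leftarrow}{\mathrm{Lim}}\,\mathcal F_i=(\prod^{\succcurlyeq}\lambda_0(i),\bigvee\{f\circ\pi_i:i\in I,f\in F_i\})$. *)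

theory Defs
  imports Complex_Main "HOL-Library.FuncSet"
begin

text \<open>Sets with their own equality are rendered as HOL sets with HOL equality;
  functions on a set A are represented extensionally (value undefined off A),
  so that equality of functions is pointwise equality on A.\<close>

definition Bica :: "(real \<Rightarrow> real) set" where
  "Bica = {\<phi>. \<forall>n::nat. uniformly_continuous_on {- real n .. real n} \<phi>}"

definition bishop_topology :: "'a set \<Rightarrow> ('a \<Rightarrow> real) set \<Rightarrow> bool" where
  "bishop_topology A F \<longleftrightarrow>
     F \<subseteq> extensional A \<and>
     (\<forall>c. restrict (\<lambda>_. c) A \<in> F) \<and>
     (\<forall>f\<in>F. \<forall>g\<in>F. restrict (\<lambda>x. f x + g x) A \<in> F) \<and>
     (\<forall>f\<in>F. \<forall>\<phi>\<in>Bica. restrict (\<phi> \<circ> f) A \<in> F) \<and>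
     (\<forall>f\<in>extensional A. (\<forall>\<epsilon>>0. \<exists>g\<in>F. \<forall>x\<in>A. \<bar>f x - g x\<bar> \<le> \<epsilon>) \<longrightarrow> f \<in> F)"

definition bishop_gen :: "'a set \<Rightarrow> ('a \<Rightarrow> real) set \<Rightarrow> ('a \<Rightarrow> real) set" where
  "bishop_gen A F0 = \<Inter>{F. bishop_topology A F \<and> F0 \<subseteq> F}"

definition is_bishop_mor ::
  "'a set \<Rightarrow> ('a \<Rightarrow> real) set \<Rightarrow> 'b set \<Rightarrow> ('b \<Rightarrow> real) set \<Rightarrow> ('a \<Rightarrow> 'b) \<Rightarrow> bool" where
  "is_bishop_mor A F B G h \<longleftrightarrow> (\<forall>x\<in>A. h x \<in> B) \<and> (\<forall>g\<in>G. restrict (g \<circ> h) A \<in> F)"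

definition Mor ::
  "'a set \<Rightarrow> ('a \<Rightarrow> real) set \<Rightarrow> 'b set \<Rightarrow> ('b \<Rightarrow> real) set \<Rightarrow> ('a \<Rightarrow> 'b) set" where
  "Mor A F B G = {h \<in> extensional A. is_bishop_mor A F B G h}"

definition exp_top ::
  "'a set \<Rightarrow> ('a \<Rightarrow> real) set \<Rightarrow> 'b set \<Rightarrow> ('b \<Rightarrow> real) set \<Rightarrow> (('a \<Rightarrow> 'b) \<Rightarrow> real) set" where
  "exp_top A F B G = bishop_gen (Mor A F B G)
      {restrict (\<lambda>h. g (h x)) (Mor A F B G) | x g. x \<in> A \<and> g \<in> G}"

definition directed_set :: "'i set \<Rightarrow> ('i \<Rightarrow> 'i \<Rightarrow> bool) \<Rightarrow> bool" where
  "directed_set I le \<longleftrightarrow>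
     (\<forall>i\<in>I. le i i) \<and>
     (\<forall>i\<in>I. \<forall>j\<in>I. \<forall>k\<in>I. le i j \<longrightarrow> le j k \<longrightarrow> le i k) \<and>
     (\<forall>i\<in>I. \<forall>j\<in>I. \<exists>k\<in>I. le i k \<and> le j k)"

definition contra_direct_spectrum ::
  "'i set \<Rightarrow> ('i \<Rightarrow> 'i \<Rightarrow> bool) \<Rightarrow> ('i \<Rightarrow> 'a set) \<Rightarrow> ('i \<Rightarrow> 'i \<Rightarrow> 'a \<Rightarrow> 'a)
     \<Rightarrow> ('i \<Rightarrow> ('a \<Rightarrow> real) set) \<Rightarrow> bool" where
  "contra_direct_spectrum I le lam0 lam F \<longleftrightarrow>
     (\<forall>i\<in>I. \<forall>j\<in>I. le i j \<longrightarrow> (\<forall>x\<in>lam0 j. lam j i x \<in> lam0 i)) \<and>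
     (\<forall>i\<in>I. \<forall>x\<in>lam0 i. lam i i x = x) \<and>
     (\<forall>i\<in>I. \<forall>j\<in>I. \<forall>k\<in>I. le i j \<longrightarrow> le j k \<longrightarrow>
        (\<forall>x\<in>lam0 k. lam k i x = lam j i (lam k j x))) \<and>
     (\<forall>i\<in>I. bishop_topology (lam0 i) (F i)) \<and>
     (\<forall>i\<in>I. \<forall>j\<in>I. le i j \<longrightarrow> is_bishop_mor (lam0 j) (F j) (lam0 i) (F i) (lam j i))"

definition dl_rel :: "'i set \<Rightarrow> ('i \<Rightarrow> 'i \<Rightarrow> bool) \<Rightarrow> ('i \<Rightarrow> 'i \<Rightarrow> 'c \<Rightarrow> 'c)
     \<Rightarrow> ('i \<times> 'c) \<Rightarrow> ('i \<times> 'c) \<Rightarrow> bool" where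
  "dl_rel I le mu p q \<longleftrightarrow>
     (\<exists>k\<in>I. le (fst p) k \<and> le (fst q) k \<and> mu (fst p) k (snd p) = mu (fst q) k (snd q))"

definition eql0 :: "'i set \<Rightarrow> ('i \<Rightarrow> 'i \<Rightarrow> bool) \<Rightarrow> ('i \<Rightarrow> 'c set) \<Rightarrow> ('i \<Rightarrow> 'i \<Rightarrow> 'c \<Rightarrow> 'c)
     \<Rightarrow> 'i \<Rightarrow> 'c \<Rightarrow> ('i \<times> 'c) set" where
  "eql0 I le mu0 mu i x = {q \<in> Sigma I mu0. dl_rel I le mu (i, x) q}"

definition dir_lim :: "'i set \<Rightarrow> ('i \<Rightarrow> 'i \<Rightarrow> bool) \<Rightarrow> ('i \<Rightarrow> 'c set) \<Rightarrow> ('i \<Rightarrow> 'i \<Rightarrow> 'c \<Rightarrow> 'c)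
     \<Rightarrow> ('i \<times> 'c) set set" where
  "dir_lim I le mu0 mu = {eql0 I le mu0 mu i x | i x. i \<in> I \<and> x \<in> mu0 i}"

definition dl_prod_top :: "'i set \<Rightarrow> ('i \<Rightarrow> 'i \<Rightarrow> bool) \<Rightarrow> ('i \<Rightarrow> 'c set) \<Rightarrow> ('i \<Rightarrow> 'i \<Rightarrow> 'c \<Rightarrow> 'c)
     \<Rightarrow> ('i \<Rightarrow> ('c \<Rightarrow> real) set) \<Rightarrow> ('i \<Rightarrow> 'c \<Rightarrow> real) set" where
  "dl_prod_top I le mu0 mu G =
     {\<Theta> \<in> Pi\<^sub>E I G. \<forall>i\<in>I. \<forall>j\<in>I. le i j \<longrightarrow> (\<forall>x\<in>mu0 i. \<Theta> i x = \<Theta> j (mu i j x))}"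

definition eql0_f :: "'i set \<Rightarrow> ('i \<Rightarrow> 'i \<Rightarrow> bool) \<Rightarrow> ('i \<Rightarrow> 'c set) \<Rightarrow> ('i \<Rightarrow> 'i \<Rightarrow> 'c \<Rightarrow> 'c)
     \<Rightarrow> ('i \<Rightarrow> 'c \<Rightarrow> real) \<Rightarrow> ('i \<times> 'c) set \<Rightarrow> real" where
  "eql0_f I le mu0 mu \<Theta> =
     restrict (\<lambda>C. let p = (SOME p. p \<in> C) in \<Theta> (fst p) (snd p)) (dir_lim I le mu0 mu)"

definition dir_lim_top :: "'i set \<Rightarrow> ('i \<Rightarrow> 'i \<Rightarrow> bool) \<Rightarrow> ('i \<Rightarrow> 'c set) \<Rightarrow> ('i \<Rightarrow> 'i \<Rightarrow> 'c \<Rightarrow> 'c)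
     \<Rightarrow> ('i \<Rightarrow> ('c \<Rightarrow> real) set) \<Rightarrow> (('i \<times> 'c) set \<Rightarrow> real) set" where
  "dir_lim_top I le mu0 mu G = bishop_gen (dir_lim I le mu0 mu)
      (eql0_f I le mu0 mu ` dl_prod_top I le mu0 mu G)"

definition inv_lim :: "'i set \<Rightarrow> ('i \<Rightarrow> 'i \<Rightarrow> bool) \<Rightarrow> ('i \<Rightarrow> 'a set) \<Rightarrow> ('i \<Rightarrow> 'i \<Rightarrow> 'a \<Rightarrow> 'a)
     \<Rightarrow> ('i \<Rightarrow> 'a) set" where
  "inv_lim I le lam0 lam =
     {\<Phi> \<in> Pi\<^sub>E I lam0. \<forall>i\<in>I. \<forall>j\<in>I. le i j \<longrightarrow> \<Phi> i = lam j i (\<Phi> j)}"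

definition inv_lim_top :: "'i set \<Rightarrow> ('i \<Rightarrow> 'i \<Rightarrow> bool) \<Rightarrow> ('i \<Rightarrow> 'a set) \<Rightarrow> ('i \<Rightarrow> 'i \<Rightarrow> 'a \<Rightarrow> 'a)
     \<Rightarrow> ('i \<Rightarrow> ('a \<Rightarrow> real) set) \<Rightarrow> (('i \<Rightarrow> 'a) \<Rightarrow> real) set" where
  "inv_lim_top I le lam0 lam F = bishop_gen (inv_lim I le lam0 lam)
      {restrict (\<lambda>\<Phi>. f (\<Phi> i)) (inv_lim I le lam0 lam) | i f. i \<in> I \<and> f \<in> F i}"

definition mor_sp0 :: "('i \<Rightarrow> 'a set) \<Rightarrow> ('i \<Rightarrow> ('a \<Rightarrow> real) set) \<Rightarrow> 'b set \<Rightarrow> ('b \<Rightarrow> real) set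
     \<Rightarrow> 'i \<Rightarrow> ('a \<Rightarrow> 'b) set" where
  "mor_sp0 lam0 F X FX i = Mor (lam0 i) (F i) X FX"

definition mor_sp :: "('i \<Rightarrow> 'a set) \<Rightarrow> ('i \<Rightarrow> 'i \<Rightarrow> 'a \<Rightarrow> 'a)
     \<Rightarrow> 'i \<Rightarrow> 'i \<Rightarrow> ('a \<Rightarrow> 'b) \<Rightarrow> ('a \<Rightarrow> 'b)" where
  "mor_sp lam0 lam i j \<phi> = restrict (\<phi> \<circ> lam j i) (lam0 j)"

definition mor_sp_top :: "('i \<Rightarrow> 'a set) \<Rightarrow> ('i \<Rightarrow> ('a \<Rightarrow> real) set) \<Rightarrow> 'b set \<Rightarrow> ('b \<Rightarrow> real) set
     \<Rightarrow> 'i \<Rightarrow> (('a \<Rightarrow> 'b) \<Rightarrow> real) set" where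
  "mor_sp_top lam0 F X FX i = exp_top (lam0 i) (F i) X FX"

end

theory Submission imports Defs begin

lemma ext_top: "bishop_topology A (extensional A)"
  unfolding bishop_topology_def by auto

lemma bishop_gen_top:
  assumes "F0 \<subseteq> extensional A" shows "bishop_topology A (bishop_gen A F0)"
proof -
  let ?S = "{F. bishop_topology A F \<and> F0 \<subseteq> F}"
  have ne: "extensional A \<in> ?S" using assms ext_top by auto
  have sub: "\<Inter>?S \<subseteq> extensional A" using ne by (rule Inter_lower)
  show ?thesis unfolding bishop_gen_def bishop_topology_def[of A "\<Inter>?S"]
  proof (intro conjI ballI allI impI)
    show "\<Inter>?S \<subseteq> extensional A" by fact
  next
    fix c :: real show "restrict (\<lambda>_. c) A \<in> \<Inter>?S" by (auto simp: bishop_topology_def)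
  next
    fix f g assume "f \<in> \<Inter>?S" "g \<in> \<Inter>?S"
    then show "restrict (\<lambda>x. f x + g x) A \<in> \<Inter>?S" by (auto simp: bishop_topology_def)
  next
    fix f \<phi> assume "f \<in> \<Inter>?S" "\<phi> \<in> Bica"
    then show "restrict (\<phi> \<circ> f) A \<in> \<Inter>?S" by (auto simp: bishop_topology_def)
  next
    fix f assume f: "f \<in> extensional A" and h: "\<forall>\<epsilon>>0. \<exists>g\<in>\<Inter>?S. \<forall>x\<in>A. \<bar>f x - g x\<bar> \<le> \<epsilon>"
    show "f \<in> \<Inter>?S"
    proof
      fix F assume F: "F \<in> ?S"
      have "\<forall>\<epsilon>>0. \<exists>g\<in>F. \<forall>x\<in>A. \<bar>f x - g x\<bar> \<le> \<epsilon>" using h F by blast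
      then show "f \<in> F" using F f unfolding bishop_topology_def by blast
    qed
  qed
qed

lemma bishop_gen_sub: "F0 \<subseteq> bishop_gen A F0"
  unfolding bishop_gen_def by auto

lemma bishop_gen_least: "bishop_topology A F \<Longrightarrow> F0 \<subseteq> F \<Longrightarrow> bishop_gen A F0 \<subseteq> F"
  unfolding bishop_gen_def by auto

lemma mor_gen:
  assumes hAB: "\<forall>x\<in>A. h x \<in> B" and FA: "bishop_topology A F"
    and G0: "G0 \<subseteq> extensional B" and gen: "\<forall>g\<in>G0. restrict (g \<circ> h) A \<in> F"
    and g: "g \<in> bishop_gen B G0"
  shows "restrict (g \<circ> h) A \<in> F"
proof -
  let ?G = "{g \<in> extensional B. restrict (g \<circ> h) A \<in> F}"
  have "bishop_topology B ?G"
    unfolding bishop_topology_def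
  proof (intro conjI ballI allI impI)
    show "?G \<subseteq> extensional B" by auto
  next
    fix c :: real
    have "restrict (restrict (\<lambda>_. c) B \<circ> h) A = restrict (\<lambda>_. c) A"
      using hAB by (auto simp: fun_eq_iff)
    then show "restrict (\<lambda>_. c) B \<in> ?G" using FA by (auto simp: bishop_topology_def)
  next
    fix f g assume f: "f \<in> ?G" and g: "g \<in> ?G"
    have "restrict (restrict (\<lambda>x. f x + g x) B \<circ> h) A
       = restrict (\<lambda>x. restrict (f \<circ> h) A x + restrict (g \<circ> h) A x) A"
      using hAB by (auto simp: fun_eq_iff)
    moreover have "restrict (\<lambda>x. restrict (f \<circ> h) A x + restrict (g \<circ> h) A x) A \<in> F"
      using f g FA unfolding bishop_topology_def by blast
    ultimately show "restrict (\<lambda>x. f x + g x) B \<in> ?G" by simp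
  next
    fix f \<phi> assume f: "f \<in> ?G" and p: "\<phi> \<in> Bica"
    have "restrict (restrict (\<phi> \<circ> f) B \<circ> h) A = restrict (\<phi> \<circ> restrict (f \<circ> h) A) A"
      using hAB by (auto simp: fun_eq_iff)
    then show "restrict (\<phi> \<circ> f) B \<in> ?G" using f p FA
      unfolding bishop_topology_def by auto
  next
    fix f assume f: "f \<in> extensional B" and h: "\<forall>\<epsilon>>0. \<exists>g\<in>?G. \<forall>x\<in>B. \<bar>f x - g x\<bar> \<le> \<epsilon>"
    have "\<forall>\<epsilon>>0. \<exists>g\<in>F. \<forall>x\<in>A. \<bar>restrict (f \<circ> h) A x - g x\<bar> \<le> \<epsilon>"
    proof (intro allI impI)
      fix e :: real assume "e > 0"
      then obtain g where "g \<in> ?G" "\<forall>x\<in>B. \<bar>f x - g x\<bar> \<le> e" using h by blast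
      then show "\<exists>g\<in>F. \<forall>x\<in>A. \<bar>restrict (f \<circ> h) A x - g x\<bar> \<le> e"
        using hAB by (intro bexI[of _ "restrict (g \<circ> h) A"]) auto
    qed
    then show "f \<in> ?G" using f FA unfolding bishop_topology_def by auto
  qed
  moreover have "G0 \<subseteq> ?G" using G0 gen by auto
  ultimately have "bishop_gen B G0 \<subseteq> ?G" by (rule bishop_gen_least)
  then show ?thesis using g by auto
qed


lemma dl_trans:
  assumes dir: "directed_set I le"
    and H2: "\<forall>i\<in>I. \<forall>j\<in>I. \<forall>k\<in>I. le i j \<longrightarrow> le j k \<longrightarrow> (\<forall>x\<in>mu0 i. mu i k x = mu j k (mu i j x))"
    and p: "p \<in> Sigma I mu0" and q: "q \<in> Sigma I mu0" and r: "r \<in> Sigma I mu0"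
    and pq: "dl_rel I le mu p q" and qr: "dl_rel I le mu q r"
  shows "dl_rel I le mu p r"
proof -
  obtain k1 where k1: "k1 \<in> I" "le (fst p) k1" "le (fst q) k1" "mu (fst p) k1 (snd p) = mu (fst q) k1 (snd q)"
    using pq unfolding dl_rel_def by blast
  obtain k2 where k2: "k2 \<in> I" "le (fst q) k2" "le (fst r) k2" "mu (fst q) k2 (snd q) = mu (fst r) k2 (snd r)"
    using qr unfolding dl_rel_def by blast
  obtain k where k: "k \<in> I" "le k1 k" "le k2 k" using dir k1 k2 unfolding directed_set_def by blast
  have tr: "\<And>a b c. a \<in> I \<Longrightarrow> b \<in> I \<Longrightarrow> c \<in> I \<Longrightarrow> le a b \<Longrightarrow> le b c \<Longrightarrow> le a c"
    using dir unfolding directed_set_def by blast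
  have pI: "fst p \<in> I" "snd p \<in> mu0 (fst p)" using p by auto
  have qI: "fst q \<in> I" "snd q \<in> mu0 (fst q)" using q by auto
  have rI: "fst r \<in> I" "snd r \<in> mu0 (fst r)" using r by auto
  have f: "\<And>a b c x. a\<in>I \<Longrightarrow> b\<in>I \<Longrightarrow> c\<in>I \<Longrightarrow> le a b \<Longrightarrow> le b c \<Longrightarrow> x \<in> mu0 a
      \<Longrightarrow> mu a c x = mu b c (mu a b x)" using H2 by blast
  have "mu (fst p) k (snd p) = mu k1 k (mu (fst p) k1 (snd p))"
    by (rule f[OF pI(1) k1(1) k(1) k1(2) k(2) pI(2)])
  also have "\<dots> = mu k1 k (mu (fst q) k1 (snd q))" using k1 by simp
  also have "\<dots> = mu (fst q) k (snd q)" by (rule f[OF qI(1) k1(1) k(1) k1(3) k(2) qI(2), symmetric])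
  also have "\<dots> = mu k2 k (mu (fst q) k2 (snd q))" by (rule f[OF qI(1) k2(1) k(1) k2(2) k(3) qI(2)])
  also have "\<dots> = mu k2 k (mu (fst r) k2 (snd r))" using k2 by simp
  also have "\<dots> = mu (fst r) k (snd r)" by (rule f[OF rI(1) k2(1) k(1) k2(3) k(3) rI(2), symmetric])
  finally show ?thesis unfolding dl_rel_def
    using tr[OF pI(1) k1(1) k(1) k1(2) k(2)] tr[OF rI(1) k2(1) k(1) k2(3) k(3)] k(1) by blast
qed

lemma dl_sym: "dl_rel I le mu p q \<Longrightarrow> dl_rel I le mu q p"
  unfolding dl_rel_def by metis

lemma eql0_eq:
  assumes dir: "directed_set I le"
    and H2: "\<forall>i\<in>I. \<forall>j\<in>I. \<forall>k\<in>I. le i j \<longrightarrow> le j k \<longrightarrow> (\<forall>x\<in>mu0 i. mu i k x = mu j k (mu i j x))"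
    and p: "p \<in> Sigma I mu0" and q: "q \<in> Sigma I mu0" and pq: "dl_rel I le mu p q"
  shows "eql0 I le mu0 mu (fst p) (snd p) = eql0 I le mu0 mu (fst q) (snd q)"
proof -
  have qp: "dl_rel I le mu q p" using pq by (rule dl_sym)
  have "dl_rel I le mu p r \<longleftrightarrow> dl_rel I le mu q r" if "r \<in> Sigma I mu0" for r
    using dl_trans[OF dir H2 q p that qp] dl_trans[OF dir H2 p q that pq] by blast
  then show ?thesis unfolding eql0_def by auto
qed

lemma self_eql0:
  assumes dir: "directed_set I le" and i: "i \<in> I" "x \<in> mu0 i"
  shows "(i, x) \<in> eql0 I le mu0 mu i x"
proof -
  have "le i i" using dir i unfolding directed_set_def by blast
  then have "dl_rel I le mu (i,x) (i,x)" using i unfolding dl_rel_def by auto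
  then show ?thesis using i unfolding eql0_def by blast
qed

lemma mem_eql0:
  assumes dir: "directed_set I le"
    and H2: "\<forall>i\<in>I. \<forall>j\<in>I. \<forall>k\<in>I. le i j \<longrightarrow> le j k \<longrightarrow> (\<forall>x\<in>mu0 i. mu i k x = mu j k (mu i j x))"
    and i: "i \<in> I" "x \<in> mu0 i" and p: "p \<in> eql0 I le mu0 mu i x"
  shows "eql0 I le mu0 mu i x = eql0 I le mu0 mu (fst p) (snd p)"
proof -
  have ps: "p \<in> Sigma I mu0" and r: "dl_rel I le mu (i,x) p" using p unfolding eql0_def by auto
  have "(i,x) \<in> Sigma I mu0" using i by blast
  from eql0_eq[OF dir H2 this ps r] show ?thesis by simp
qed

lemma mor_sp_mor:
  assumes sp: "contra_direct_spectrum I le lam0 lam F"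
    and ij: "i \<in> I" "j \<in> I" "le i j" and phi: "\<phi> \<in> Mor (lam0 i) (F i) X FX"
  shows "mor_sp lam0 lam i j \<phi> \<in> Mor (lam0 j) (F j) X FX"
proof -
  have maps: "\<forall>x\<in>lam0 j. lam j i x \<in> lam0 i" using sp ij unfolding contra_direct_spectrum_def by blast
  have lm: "is_bishop_mor (lam0 j) (F j) (lam0 i) (F i) (lam j i)"
    using sp ij unfolding contra_direct_spectrum_def by blast
  have pm: "\<forall>x\<in>lam0 i. \<phi> x \<in> X" "\<forall>g\<in>FX. restrict (g \<circ> \<phi>) (lam0 i) \<in> F i"
    using phi unfolding Mor_def is_bishop_mor_def by auto
  show ?thesis unfolding Mor_def is_bishop_mor_def mor_sp_def
  proof (intro CollectI conjI ballI)
    show "restrict (\<phi> \<circ> lam j i) (lam0 j) \<in> extensional (lam0 j)" by simp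
  next
    fix x assume "x \<in> lam0 j" then show "restrict (\<phi> \<circ> lam j i) (lam0 j) x \<in> X" using maps pm by auto
  next
    fix g assume g: "g \<in> FX"
    have "restrict (g \<circ> restrict (\<phi> \<circ> lam j i) (lam0 j)) (lam0 j)
       = restrict (restrict (g \<circ> \<phi>) (lam0 i) \<circ> lam j i) (lam0 j)"
      using maps by (auto simp: fun_eq_iff)
    also have "\<dots> \<in> F j" using lm pm(2) g unfolding is_bishop_mor_def by blast
    finally show "restrict (g \<circ> restrict (\<phi> \<circ> lam j i) (lam0 j)) (lam0 j) \<in> F j" .
  qed
qed

lemma mor_sp_comp:
  assumes sp: "contra_direct_spectrum I le lam0 lam F"
    and ijk: "i \<in> I" "j \<in> I" "k \<in> I" "le i j" "le j k"
  shows "mor_sp lam0 lam i k \<phi> = mor_sp lam0 lam j k (mor_sp lam0 lam i j \<phi>)"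
proof -
  have maps: "\<forall>x\<in>lam0 k. lam k j x \<in> lam0 j" using sp ijk unfolding contra_direct_spectrum_def by blast
  have c: "\<forall>x\<in>lam0 k. lam k i x = lam j i (lam k j x)" using sp ijk unfolding contra_direct_spectrum_def by blast
  show ?thesis unfolding mor_sp_def using maps c by (auto simp: fun_eq_iff)
qed


theorem proposition11p4:
  fixes I :: "'i set" and le :: "'i \<Rightarrow> 'i \<Rightarrow> bool"
    and lam0 :: "'i \<Rightarrow> 'a set" and lam :: "'i \<Rightarrow> 'i \<Rightarrow> 'a \<Rightarrow> 'a"
    and F :: "'i \<Rightarrow> ('a \<Rightarrow> real) set"
    and X :: "'b set" and FX :: "('b \<Rightarrow> real) set"
  assumes "directed_set I le"
    and "contra_direct_spectrum I le lam0 lam F"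
    and "bishop_topology X FX"
  shows "\<exists>hat.
     hat \<in> Mor (dir_lim I le (mor_sp0 lam0 F X FX) (mor_sp lam0 lam))
               (dir_lim_top I le (mor_sp0 lam0 F X FX) (mor_sp lam0 lam) (mor_sp_top lam0 F X FX))
               (Mor (inv_lim I le lam0 lam) (inv_lim_top I le lam0 lam F) X FX)
               (exp_top (inv_lim I le lam0 lam) (inv_lim_top I le lam0 lam F) X FX)
     \<and> ((\<forall>j\<in>I. \<forall>y\<in>lam0 j. \<exists>\<Theta>\<in>inv_lim I le lam0 lam. \<Theta> j = y)
          \<longrightarrow> inj_on hat (dir_lim I le (mor_sp0 lam0 F X FX) (mor_sp lam0 lam)))"
proof -
  note dir = assms(1) and sp = assms(2)
  define M0 where "M0 = mor_sp0 lam0 F X FX"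
  define M where "M = (mor_sp lam0 lam :: _ \<Rightarrow> _ \<Rightarrow> (_ \<Rightarrow> 'b) \<Rightarrow> _)"
  define D where "D = dir_lim I le M0 M"
  define IL where "IL = inv_lim I le lam0 lam"
  define MIL where "MIL = Mor IL (inv_lim_top I le lam0 lam F) X FX"
  define rep where "rep = (\<lambda>C::('i \<times> ('a \<Rightarrow> 'b)) set. SOME p. p \<in> C)"
  define hat where "hat = restrict (\<lambda>C. restrict (\<lambda>\<Phi>. snd (rep C) (\<Phi> (fst (rep C)))) IL) D"
  have H2: "\<forall>i\<in>I. \<forall>j\<in>I. \<forall>k\<in>I. le i j \<longrightarrow> le j k \<longrightarrow> (\<forall>x\<in>M0 i. M i k x = M j k (M i j x))"
    unfolding M_def using mor_sp_comp[OF sp] by blast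
  have repD: "rep C \<in> C \<and> rep C \<in> Sigma I M0 \<and> C = eql0 I le M0 M (fst (rep C)) (snd (rep C))"
    if C: "C \<in> D" for C
  proof -
    obtain i x where ix: "i \<in> I" "x \<in> M0 i" "C = eql0 I le M0 M i x"
      using C unfolding D_def dir_lim_def by blast
    have "(i,x) \<in> C" using self_eql0[OF dir ix(1), of x M0 M, OF ix(2)] ix(3) by simp
    then have r: "rep C \<in> C" unfolding rep_def by (rule someI)
    then have "rep C \<in> Sigma I M0" using ix(3) unfolding eql0_def by auto
    moreover have "C = eql0 I le M0 M (fst (rep C)) (snd (rep C))"
      using mem_eql0[OF dir H2 ix(1,2)] r ix(3) by simp
    ultimately show ?thesis using r by blast
  qed
  have hatC: "hat C = restrict (\<lambda>\<Phi>. snd (rep C) (\<Phi> (fst (rep C)))) IL" if "C \<in> D" for C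
    using that unfolding hat_def by simp
  have ILpi: "\<Phi> i \<in> lam0 i" if "\<Phi> \<in> IL" "i \<in> I" for \<Phi> i
    using that unfolding IL_def inv_lim_def by auto
  have ILc: "\<Phi> i = lam j i (\<Phi> j)" if "\<Phi> \<in> IL" "i \<in> I" "j \<in> I" "le i j" for \<Phi> i j
    using that unfolding IL_def inv_lim_def by auto
  have hat_in: "hat C \<in> MIL" if C: "C \<in> D" for C
  proof -
    obtain i \<phi> where p: "rep C = (i, \<phi>)" "i \<in> I" "\<phi> \<in> Mor (lam0 i) (F i) X FX"
      using repD[OF C] unfolding M0_def mor_sp0_def by (cases "rep C") auto
    have pm: "\<forall>x\<in>lam0 i. \<phi> x \<in> X" "\<forall>g\<in>FX. restrict (g \<circ> \<phi>) (lam0 i) \<in> F i"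
      using p(3) unfolding Mor_def is_bishop_mor_def by auto
    have h: "hat C = restrict (\<lambda>\<Phi>. \<phi> (\<Phi> i)) IL" using hatC[OF C] p by simp
    show ?thesis unfolding MIL_def Mor_def is_bishop_mor_def h
    proof (intro CollectI conjI ballI)
      show "restrict (\<lambda>\<Phi>. \<phi> (\<Phi> i)) IL \<in> extensional IL" by simp
    next
      fix \<Phi> assume "\<Phi> \<in> IL" then show "restrict (\<lambda>\<Phi>. \<phi> (\<Phi> i)) IL \<Phi> \<in> X"
        using ILpi p(2) pm by auto
    next
      fix g assume g: "g \<in> FX"
      have "restrict (g \<circ> restrict (\<lambda>\<Phi>. \<phi> (\<Phi> i)) IL) IL
          = restrict (\<lambda>\<Phi>. restrict (g \<circ> \<phi>) (lam0 i) (\<Phi> i)) IL"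
        using ILpi p(2) by (auto simp: fun_eq_iff)
      also have "\<dots> \<in> inv_lim_top I le lam0 lam F"
        unfolding inv_lim_top_def
        apply (rule subsetD[OF bishop_gen_sub])
        using p(2) pm(2) g unfolding IL_def by blast
      finally show "restrict (g \<circ> restrict (\<lambda>\<Phi>. \<phi> (\<Phi> i)) IL) IL \<in> inv_lim_top I le lam0 lam F" .
    qed
  qed
  have part1: "hat \<in> Mor D (dir_lim_top I le M0 M (mor_sp_top lam0 F X FX)) MIL
       (exp_top IL (inv_lim_top I le lam0 lam F) X FX)"
    unfolding Mor_def is_bishop_mor_def
  proof (intro CollectI conjI ballI)
    show "hat \<in> extensional D" unfolding hat_def by simp
  next
    fix C assume "C \<in> D" then show "hat C \<in> MIL" by (rule hat_in)
  next
    fix g assume g: "g \<in> exp_top IL (inv_lim_top I le lam0 lam F) X FX"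
    let ?G0 = "{restrict (\<lambda>h. g (h x)) MIL | x g. x \<in> IL \<and> g \<in> FX}"
    have g': "g \<in> bishop_gen MIL ?G0" using g unfolding exp_top_def MIL_def by simp
    have DT: "bishop_topology D (dir_lim_top I le M0 M (mor_sp_top lam0 F X FX))"
      unfolding dir_lim_top_def D_def
      by (rule bishop_gen_top) (auto simp: eql0_f_def)
    show "restrict (g \<circ> hat) D \<in> dir_lim_top I le M0 M (mor_sp_top lam0 F X FX)"
    proof (rule mor_gen[OF _ DT _ _ g'])
      show "\<forall>x\<in>D. hat x \<in> MIL" using hat_in by blast
      show "?G0 \<subseteq> extensional MIL" by auto
      show "\<forall>g0\<in>?G0. restrict (g0 \<circ> hat) D \<in> dir_lim_top I le M0 M (mor_sp_top lam0 F X FX)"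
      proof
        fix g0 assume "g0 \<in> ?G0"
        then obtain \<Phi> f where g0: "g0 = restrict (\<lambda>h. f (h \<Phi>)) MIL" "\<Phi> \<in> IL" "f \<in> FX" by blast
        define \<Theta> where "\<Theta> = restrict (\<lambda>i. restrict (\<lambda>\<phi>. f (\<phi> (\<Phi> i))) (M0 i)) I"
        have Th: "\<Theta> \<in> dl_prod_top I le M0 M (mor_sp_top lam0 F X FX)"
          unfolding dl_prod_top_def
        proof (intro CollectI conjI ballI impI)
          show "\<Theta> \<in> Pi\<^sub>E I (mor_sp_top lam0 F X FX)"
          proof
            fix i assume i: "i \<in> I"
            show "\<Theta> i \<in> mor_sp_top lam0 F X FX i"
              unfolding mor_sp_top_def exp_top_def \<Theta>_def
              apply (rule subsetD[OF bishop_gen_sub])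
              using i ILpi[OF g0(2) i] g0(3) unfolding M0_def mor_sp0_def by auto
          next
            fix i assume "i \<notin> I" then show "\<Theta> i = undefined" unfolding \<Theta>_def by simp
          qed
        next
          fix i j x assume ij: "i \<in> I" "j \<in> I" "le i j" and x: "x \<in> M0 i"
          have Mx: "M i j x \<in> M0 j" using mor_sp_mor[OF sp ij] x unfolding M0_def M_def mor_sp0_def by blast
          have "M i j x (\<Phi> j) = x (\<Phi> i)"
            using ILpi[OF g0(2) ij(2)] ILc[OF g0(2) ij] unfolding M_def mor_sp_def by simp
          then show "\<Theta> i x = \<Theta> j (M i j x)" unfolding \<Theta>_def using ij x Mx by simp
        qed
        have "restrict (g0 \<circ> hat) D = eql0_f I le M0 M \<Theta>"
        proof (rule ext)
          fix C show "restrict (g0 \<circ> hat) D C = eql0_f I le M0 M \<Theta> C"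
          proof (cases "C \<in> D")
            case True
            have r: "rep C \<in> Sigma I M0" using repD[OF True] by blast
            have "restrict (g0 \<circ> hat) D C = f (snd (rep C) (\<Phi> (fst (rep C))))"
              using True hat_in[OF True] hatC[OF True] g0 by simp
            also have "\<dots> = eql0_f I le M0 M \<Theta> C"
              using True r unfolding eql0_f_def D_def \<Theta>_def rep_def by (auto simp: Let_def)
            finally show ?thesis .
          next
            case False then show ?thesis unfolding eql0_f_def D_def by simp
          qed
        qed
        also have "\<dots> \<in> dir_lim_top I le M0 M (mor_sp_top lam0 F X FX)"
          unfolding dir_lim_top_def
          apply (rule subsetD[OF bishop_gen_sub]) using Th by blast
        finally show "restrict (g0 \<circ> hat) D \<in> dir_lim_top I le M0 M (mor_sp_top lam0 F X FX)" .
      qed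
    qed
  qed
  have part2: "inj_on hat D" if surjT: "\<forall>j\<in>I. \<forall>y\<in>lam0 j. \<exists>\<Theta>\<in>IL. \<Theta> j = y"
  proof
    fix C1 C2 assume C1: "C1 \<in> D" and C2: "C2 \<in> D" and eq: "hat C1 = hat C2"
    obtain i \<phi> where p1: "rep C1 = (i, \<phi>)" "i \<in> I" "\<phi> \<in> M0 i"
      using repD[OF C1] by (cases "rep C1") auto
    obtain j \<psi> where p2: "rep C2 = (j, \<psi>)" "j \<in> I" "\<psi> \<in> M0 j"
      using repD[OF C2] by (cases "rep C2") auto
    have ev: "\<phi> (\<Phi> i) = \<psi> (\<Phi> j)" if "\<Phi> \<in> IL" for \<Phi>
    proof -
      have "hat C1 \<Phi> = hat C2 \<Phi>" using eq by simp
      then show ?thesis using hatC[OF C1] hatC[OF C2] p1 p2 that by simp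
    qed
    obtain k where k: "k \<in> I" "le i k" "le j k" using dir p1(2) p2(2) unfolding directed_set_def by blast
    have "M i k \<phi> = M j k \<psi>"
    proof (rule ext)
      fix y show "M i k \<phi> y = M j k \<psi> y"
      proof (cases "y \<in> lam0 k")
        case True
        then obtain \<Theta> where Th: "\<Theta> \<in> IL" "\<Theta> k = y" using surjT k(1) by blast
        have "\<phi> (lam k i y) = \<psi> (lam k j y)"
          using ev[OF Th(1)] ILc[OF Th(1) p1(2) k(1) k(2)] ILc[OF Th(1) p2(2) k(1) k(3)] Th(2) by simp
        then show ?thesis using True unfolding M_def mor_sp_def by simp
      next
        case False then show ?thesis unfolding M_def mor_sp_def by simp
      qed
    qed
    then have "dl_rel I le M (rep C1) (rep C2)" unfolding dl_rel_def using p1 p2 k by auto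
    from eql0_eq[OF dir H2 _ _ this] repD[OF C1] repD[OF C2]
    show "C1 = C2" by metis
  qed
  show ?thesis
    apply (rule exI[of _ hat])
    using part1 part2 unfolding D_def M0_def M_def IL_def MIL_def by blast
qed

end
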